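(* For any real $\lambda$ and $\theta$ and any $0<x<\pi/2$, \[ \left|\lambda\int_0^x\frac{\cos(\lambda y-\theta)}{\cos y}\,dy-\sin\theta\right|<\frac{1}{\cos x}. \] *)

theory Defs
  imports "HOL-Analysis.Analysis"
begin

end

theory Submission
  imports Defs "HOL-Complex_Analysis.Complex_Analysis"
begin

lemma norm_cos_ge: "\<bar>cos (Re z)\<bar> * cosh (Im z) \<le> cmod (cos z)"
proof -
  have "\<bar>Re (cos z)\<bar> \<le> cmod (cos z)" by (rule abs_Re_le_cmod)
  moreover have "Re (cos z) = cos (Re z) * cosh (Im z)"
    by (simp add: Re_cos cosh_def)
  moreover have "cosh (Im z) > 0" by simp
  ultimately show ?thesis by (simp add: abs_mult)
qed

lemma cos_imag: "cos (Complex 0 t) = complex_of_real (cosh t)"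
  by (rule complex_eqI) (simp_all add: Re_cos Im_cos cosh_def)

lemma cos_nz_strip:
  assumes "0 \<le> Re z" "Re z < pi/2"
  shows "cos z \<noteq> 0"
proof -
  have "cos (Re z) > 0" using assms by (intro cos_gt_zero_pi) auto
  hence "0 < \<bar>cos (Re z)\<bar> * cosh (Im z)" by simp
  also have "\<dots> \<le> cmod (cos z)" by (rule norm_cos_ge)
  finally show ?thesis by auto
qed

lemma cauchy_rect:
  fixes l x T :: real
  assumes "0 < x" "x < pi/2" "0 \<le> T"
  defines "G \<equiv> (\<lambda>z. exp (\<i> * complex_of_real l * z) / cos z)"
  shows "contour_integral (linepath 0 (Complex x 0)) G
       + contour_integral (linepath (Complex x 0) (Complex x T)) G
       + contour_integral (linepath (Complex x T) (Complex 0 T)) G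
       + contour_integral (linepath (Complex 0 T) 0) G = 0"
proof -
  define S where "S = {z. Re z \<ge> 0} \<inter> {z. Re z \<le> x}"
  have cS: "convex S" unfolding S_def
    by (intro convex_Int convex_halfspace_Re_ge convex_halfspace_Re_le)
  have nz: "cos z \<noteq> 0" if "z \<in> S" for z
    using that assms by (intro cos_nz_strip) (auto simp: S_def)
  have hol: "G holomorphic_on S" unfolding G_def
    using nz by (intro holomorphic_intros) auto
  have cont: "continuous_on S G" using hol holomorphic_on_imp_continuous_on by blast
  have img: "path_image (rectpath 0 (Complex x T)) \<subseteq> S"
  proof -
    have "path_image (rectpath 0 (Complex x T)) \<subseteq> cbox 0 (Complex x T)"
      by (rule path_image_rectpath_subset_cbox) (use assms in auto)
    also have "\<dots> \<subseteq> S" by (auto simp: in_cbox_complex_iff S_def)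
    finally show ?thesis .
  qed
  have "(G has_contour_integral 0) (rectpath 0 (Complex x T))"
    by (rule Cauchy_theorem_convex_simple[OF hol cS valid_path_rectpath img]) simp
  hence "contour_integral (rectpath 0 (Complex x T)) G = 0"
    using contour_integral_unique by blast
  moreover
  have seg: "closed_segment a b \<subseteq> S" if "a \<in> S" "b \<in> S" for a b
    using cS that by (simp add: closed_segment_subset)
  have ci: "G contour_integrable_on linepath a b" if "a \<in> S" "b \<in> S" for a b
    by (rule contour_integrable_continuous_linepath, rule continuous_on_subset[OF cont seg[OF that]])
  have inS: "0 \<in> S" "Complex x 0 \<in> S" "Complex x T \<in> S" "Complex 0 T \<in> S"
    using assms by (auto simp: S_def)
  have "contour_integral (rectpath 0 (Complex x T)) G =
      contour_integral (linepath 0 (Complex x 0)) G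
       + (contour_integral (linepath (Complex x 0) (Complex x T)) G
       + (contour_integral (linepath (Complex x T) (Complex 0 T)) G
       + contour_integral (linepath (Complex 0 T) 0) G))"
    unfolding rectpath_def Let_def using inS
    by (simp add: contour_integral_join ci contour_integrable_joinI valid_path_join)
  ultimately show ?thesis by (simp add: add.assoc)
qed


definition strip :: "real \<Rightarrow> complex set" where
  "strip x = {z. Re z \<ge> 0} \<inter> {z. Re z \<le> x}"

lemma convex_strip: "convex (strip x)"
  unfolding strip_def by (intro convex_Int convex_halfspace_Re_ge convex_halfspace_Re_le)

lemma seg_strip: "a \<in> strip x \<Longrightarrow> b \<in> strip x \<Longrightarrow> closed_segment a b \<subseteq> strip x"
  using convex_strip by (simp add: closed_segment_subset)

lemma cont_G:
  assumes "x < pi/2"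
  shows "continuous_on (strip x) (\<lambda>z. exp (\<i> * complex_of_real l * z) / cos z)"
proof -
  have nz: "\<forall>z\<in>strip x. cos z \<noteq> 0" using assms by (intro ballI cos_nz_strip) (auto simp: strip_def)
  show ?thesis using nz by (intro continuous_intros) auto
qed

lemma norm_G:
  assumes "0 \<le> Re z" "Re z \<le> x" "x < pi/2"
  shows "cmod (exp (\<i> * complex_of_real l * z) / cos z) \<le> exp (- l * Im z) / (cos x * cosh (Im z))"
proof -
  have cx: "cos x > 0" using assms by (intro cos_gt_zero_pi) auto
  have "cos x \<le> cos (Re z)" using assms by (intro cos_monotone_0_pi_le) auto
  hence "cos x * cosh (Im z) \<le> \<bar>cos (Re z)\<bar> * cosh (Im z)" by (intro mult_right_mono) auto
  also have "\<dots> \<le> cmod (cos z)" by (rule norm_cos_ge)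
  finally have le: "cos x * cosh (Im z) \<le> cmod (cos z)" .
  have pos: "0 < cos x * cosh (Im z)" using cx by simp
  have "cmod (exp (\<i> * complex_of_real l * z) / cos z) = exp (- l * Im z) / cmod (cos z)"
    by (simp add: norm_divide norm_exp_eq_Re)
  also have "\<dots> \<le> exp (- l * Im z) / (cos x * cosh (Im z))"
    by (rule divide_left_mono[OF le]) (use pos le in \<open>auto intro!: mult_pos_pos\<close>)
  finally show ?thesis .
qed

lemma seg2:
  fixes l x T :: real
  assumes "0 < x" "x < pi/2" "0 \<le> T"
  defines "G \<equiv> (\<lambda>z. exp (\<i> * complex_of_real l * z) / cos z)"
  shows "cmod (contour_integral (linepath (Complex x 0) (Complex x T)) G)
     \<le> integral {0..1} (\<lambda>s. T * exp (- l * (s * T)) / cosh (s * T)) / cos x"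
proof -
  have cx: "cos x > 0" using assms by (intro cos_gt_zero) auto
  have seg: "closed_segment (Complex x 0) (Complex x T) \<subseteq> strip x"
    using assms by (intro seg_strip) (auto simp: strip_def)
  have "G contour_integrable_on linepath (Complex x 0) (Complex x T)"
    unfolding G_def using assms
    by (intro contour_integrable_continuous_linepath continuous_on_subset[OF cont_G seg])
  hence "(G has_contour_integral contour_integral (linepath (Complex x 0) (Complex x T)) G) (linepath (Complex x 0) (Complex x T))"
    by (rule has_contour_integral_integral)
  hence hi: "((\<lambda>s. G (linepath (Complex x 0) (Complex x T) s) * (Complex x T - Complex x 0)) has_integral
       contour_integral (linepath (Complex x 0) (Complex x T)) G) {0..1}"
    by (simp add: has_contour_integral_linepath)
  have lp: "linepath (Complex x 0) (Complex x T) s = Complex x (s * T)" for s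
    by (simp add: linepath_def complex_eq_iff algebra_simps)
  have intg: "(\<lambda>s. T * exp (- l * (s * T)) / cosh (s * T) / cos x) integrable_on {0..1}"
    using cx by (intro integrable_continuous_interval continuous_intros) auto
  have "cmod (contour_integral (linepath (Complex x 0) (Complex x T)) G)
     \<le> integral {0..1} (\<lambda>s. T * exp (- l * (s * T)) / cosh (s * T) / cos x)"
  proof (rule integral_norm_bound_integral[OF hi[THEN has_integral_integrable] intg, unfolded integral_unique[OF hi]])
    fix s :: real assume s: "s \<in> {0..1}"
    have "cmod (G (Complex x (s * T))) \<le> exp (- l * (s * T)) / (cos x * cosh (s * T))"
      unfolding G_def using norm_G[of "Complex x (s*T)" x l] assms by simp
    hence "cmod (G (Complex x (s * T))) * T \<le> exp (- l * (s * T)) / (cos x * cosh (s * T)) * T"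
      using assms by (intro mult_right_mono) auto
    moreover have "cmod (Complex x T - Complex x 0) = T" using assms by (simp add: complex_diff cmod_def)
    ultimately show "cmod (G (linepath (Complex x 0) (Complex x T) s) * (Complex x T - Complex x 0))
        \<le> T * exp (- l * (s * T)) / cosh (s * T) / cos x"
      unfolding lp norm_mult by (simp add: ac_simps)
  qed
  also have "\<dots> = integral {0..1} (\<lambda>s. T * exp (- l * (s * T)) / cosh (s * T)) / cos x"
    by (rule integral_divide)
  finally show ?thesis .
qed


lemma seg3:
  fixes l x T :: real
  assumes "0 < x" "x < pi/2" "0 \<le> T"
  defines "G \<equiv> (\<lambda>z. exp (\<i> * complex_of_real l * z) / cos z)"
  shows "cmod (contour_integral (linepath (Complex x T) (Complex 0 T)) G)
     \<le> exp (- l * T) / (cos x * cosh T) * x"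
proof -
  have cx: "cos x > 0" using assms by (intro cos_gt_zero) auto
  have seg: "closed_segment (Complex x T) (Complex 0 T) \<subseteq> strip x"
    using assms by (intro seg_strip) (auto simp: strip_def)
  have "G contour_integrable_on linepath (Complex x T) (Complex 0 T)"
    unfolding G_def using assms
    by (intro contour_integrable_continuous_linepath continuous_on_subset[OF cont_G seg])
  hence hc: "(G has_contour_integral contour_integral (linepath (Complex x T) (Complex 0 T)) G) (linepath (Complex x T) (Complex 0 T))"
    by (rule has_contour_integral_integral)
  have "cmod (contour_integral (linepath (Complex x T) (Complex 0 T)) G)
     \<le> exp (- l * T) / (cos x * cosh T) * cmod (Complex 0 T - Complex x T)"
  proof (rule has_contour_integral_bound_linepath[OF hc])
    show "0 \<le> exp (- l * T) / (cos x * cosh T)" using cx by simp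
  next
    fix z assume z: "z \<in> closed_segment (Complex x T) (Complex 0 T)"
    hence "Im z = T" by (simp add: closed_segment_same_Im)
    moreover have "z \<in> strip x" using z seg by auto
    ultimately show "cmod (G z) \<le> exp (- l * T) / (cos x * cosh T)"
      unfolding G_def using norm_G[of z x l] assms by (auto simp: strip_def)
  qed
  also have "cmod (Complex 0 T - Complex x T) = x" using assms by (simp add: complex_diff cmod_def)
  finally show ?thesis .
qed

lemma seg4:
  fixes l x T :: real
  assumes "0 \<le> T"
  defines "G \<equiv> (\<lambda>z. exp (\<i> * complex_of_real l * z) / cos z)"
  shows "contour_integral (linepath (Complex 0 T) 0) G
     = - (\<i> * complex_of_real (integral {0..1} (\<lambda>s. T * exp (- l * (s * T)) / cosh (s * T))))"
proof -
  define h where "h = (\<lambda>s::real. T * exp (- l * (s * T)) / cosh (s * T))"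
  have "h integrable_on {0..1}" unfolding h_def
    by (intro integrable_continuous_interval continuous_intros) auto
  hence "(h has_integral integral {0..1} h) {0..1}" by (rule integrable_integral)
  hence "((\<lambda>s. \<i> * complex_of_real (h s)) has_integral (\<i> * complex_of_real (integral {0..1} h))) {0..1}"
    by (intro has_integral_mult_right has_integral_of_real)
  moreover have "G (linepath 0 (Complex 0 T) s) * (Complex 0 T - 0) = \<i> * complex_of_real (h s)" for s
  proof -
    have lp: "linepath 0 (Complex 0 T) s = Complex 0 (s * T)"
      by (simp add: linepath_def complex_eq_iff)
    have e: "exp (\<i> * complex_of_real l * Complex 0 (s * T)) = complex_of_real (exp (- l * (s * T)))"
      by (simp add: complex_eq_iff exp_of_real[symmetric] Re_exp Im_exp)
    show ?thesis unfolding lp G_def e cos_imag h_def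
      by (simp add: complex_eq_iff)
  qed
  ultimately have "((\<lambda>s. G (linepath 0 (Complex 0 T) s) * (Complex 0 T - 0)) has_integral (\<i> * complex_of_real (integral {0..1} h))) {0..1}"
    by simp
  hence "(G has_contour_integral (\<i> * complex_of_real (integral {0..1} h))) (linepath 0 (Complex 0 T))"
    by (simp add: has_contour_integral_linepath)
  hence "contour_integral (linepath 0 (Complex 0 T)) G = \<i> * complex_of_real (integral {0..1} h)"
    by (rule contour_integral_unique)
  moreover have "contour_integral (linepath (Complex 0 T) 0) G = - contour_integral (linepath 0 (Complex 0 T)) G"
    using contour_integral_reversepath[of "linepath 0 (Complex 0 T)" G] by simp
  ultimately show ?thesis unfolding h_def by simp
qed

lemma seg1:
  fixes l x :: real
  assumes "0 < x" "x < pi/2"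
  defines "G \<equiv> (\<lambda>z. exp (\<i> * complex_of_real l * z) / cos z)"
  shows "((\<lambda>y. G (complex_of_real y)) has_integral contour_integral (linepath 0 (Complex x 0)) G) {0..x}"
proof -
  have seg: "closed_segment 0 (Complex x 0) \<subseteq> strip x"
    using assms by (intro seg_strip) (auto simp: strip_def)
  have "G contour_integrable_on linepath 0 (Complex x 0)"
    unfolding G_def using assms
    by (intro contour_integrable_continuous_linepath continuous_on_subset[OF cont_G seg])
  hence hc: "(G has_contour_integral contour_integral (linepath 0 (Complex x 0)) G) (linepath 0 (Complex x 0))"
    by (rule has_contour_integral_integral)
  have r: "Complex x 0 \<in> \<real>" by (simp add: complex_is_Real_iff)
  show ?thesis using hc has_contour_integral_linepath_Reals_iff[of 0 "Complex x 0" G] r assms by simp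
qed


lemma sech_le:
  fixes t :: real assumes "0 \<le> t"
  shows "1 / cosh t \<le> 1/2 + exp (-t) - exp (-t)^2 / 2"
proof -
  define u where "u = exp (-t)"
  have u: "0 < u" "u \<le> 1" using assms by (auto simp: u_def)
  have et: "exp t = 1 / u" by (simp add: u_def exp_minus divide_inverse)
  have c: "cosh t = (1 + u^2) / (2 * u)" unfolding cosh_def et using u
    by (simp add: u_def field_simps power2_eq_square exp_minus)
  have "0 \<le> (1 - u)^2 * (1 - u^2) / 2" using u by (intro divide_nonneg_pos mult_nonneg_nonneg) (auto simp: power_le_one)
  also have "(1 - u)^2 * (1 - u^2) / 2 = (1/2 + u - u^2/2)*(1+u^2) - 2*u"
    by (simp add: power2_eq_square field_simps)
  finally have "2 * u \<le> (1/2 + u - u^2/2)*(1+u^2)" by simp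
  hence "2 * u / (1 + u^2) \<le> 1/2 + u - u^2 / 2"
    by (subst pos_divide_le_eq) (auto simp: add_pos_nonneg)
  thus ?thesis unfolding c u_def[symmetric] using u by simp
qed

lemma H_bound:
  fixes l T :: real
  assumes "0 < l" "0 \<le> T"
  shows "l * integral {0..1} (\<lambda>s. T * exp (- l * (s * T)) / cosh (s * T))
           \<le> 1 - 1 / ((l+1)*(l+2)) + exp (- T) / 2"
    and "0 \<le> integral {0..1} (\<lambda>s. T * exp (- l * (s * T)) / cosh (s * T))"
proof -
  define h where "h = (\<lambda>s::real. T * exp (- l * (s * T)) / cosh (s * T))"
  have "h integrable_on {0..1}" unfolding h_def
    by (intro integrable_continuous_interval continuous_intros) auto
  hence hi: "(h has_integral integral {0..1} h) {0..1}" by (rule integrable_integral)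
  show "0 \<le> integral {0..1} (\<lambda>s. T * exp (- l * (s * T)) / cosh (s * T))"
    using has_integral_nonneg[OF hi] assms unfolding h_def by auto
  define P where "P = (\<lambda>s::real. - 1/2 * exp ((- l * T) * s) - l / (l+1) * exp ((- (l+1) * T) * s)
        + l / (2*(l+2)) * exp ((- (l+2) * T) * s))"
  define P' where "P' = (\<lambda>s::real. l * T * exp (- l * (s * T)) * (1/2 + exp (- (s*T)) - exp (- (s*T))^2 / 2))"
  have alg: "- 1/2 * (E1 * (- l * T)) - l / (l+1) * (E1 * E2 * (- (l+1) * T))
        + l / (2*(l+2)) * (E1 * E2^2 * (- (l+2) * T)) = l * T * E1 * (1/2 + E2 - E2^2/2)" for E1 E2 :: real
  proof -
    have ne: "l + 1 \<noteq> 0" "l + 2 \<noteq> 0" using assms by auto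
    have a1: "l / (l+1) * (l+1) = l" using ne by auto
    have "l / (2*(l+2)) * (l+2) = l / 2 * ((l+2)/(l+2))"
      by (simp only: divide_divide_eq_left[symmetric] times_divide_eq_right mult.commute[of 2]) simp
    hence a2: "l / (2*(l+2)) * (l+2) = l / 2" using ne by simp
    have gen: "- 1/2 * (E1 * (- l * T)) - q1 * (E1 * E2 * (- (l+1) * T))
        + q2 * (E1 * E2^2 * (- (l+2) * T)) =  l*T*E1/2 + (q1 * (l+1)) * (E1 * E2 * T)
        - (q2 * (l+2)) * (E1 * E2^2 * T)" for q1 q2 :: real by (simp add: algebra_simps)
    have "- 1/2 * (E1 * (- l * T)) - l / (l+1) * (E1 * E2 * (- (l+1) * T))
        + l / (2*(l+2)) * (E1 * E2^2 * (- (l+2) * T)) =  l*T*E1/2 + (l / (l+1) * (l+1)) * (E1 * E2 * T)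
        - (l / (2*(l+2)) * (l+2)) * (E1 * E2^2 * T)" by (rule gen)
    also have "\<dots> = l * T * E1 * (1/2 + E2 - E2^2/2)" unfolding a1 a2 by (simp add: algebra_simps)
    finally show ?thesis .
  qed
  have der: "(P has_real_derivative P' s) (at s within {0..1})" for s
  proof -
    have d: "((\<lambda>r. exp (c0 * r)) has_real_derivative exp (c0 * s) * c0) (at s within {0..1})" for c0 :: real
      by (auto intro!: derivative_eq_intros)
    have "(P has_real_derivative (- 1/2 * (exp ((- l * T) * s) * (- l * T)) - l / (l+1) * (exp ((- (l+1) * T) * s) * (- (l+1) * T))
        + l / (2*(l+2)) * (exp ((- (l+2) * T) * s) * (- (l+2) * T)))) (at s within {0..1})"
      unfolding P_def by (intro DERIV_add DERIV_diff DERIV_cmult d)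
    moreover have "exp ((- (l+1) * T) * s) = exp ((- l * T) * s) * exp (- (s*T))"
      by (simp add: exp_add[symmetric] algebra_simps)
    moreover have "exp ((- (l+2) * T) * s) = exp ((- l * T) * s) * exp (- (s*T))^2"
      by (simp add: exp_add[symmetric] algebra_simps power2_eq_square)
    moreover have "exp ((- l * T) * s) = exp (- l * (s * T))" by (simp add: algebra_simps)
    ultimately show ?thesis unfolding P'_def alg by (simp only: alg)
  qed
  have "(P' has_integral (P 1 - P 0)) {0..1}"
    by (intro fundamental_theorem_of_calculus) (auto simp: has_real_derivative_iff_has_vector_derivative[symmetric] der)
  hence "((\<lambda>s. l * h s) has_integral l * integral {0..1} h) {0..1} \<and> l * integral {0..1} h \<le> P 1 - P 0"
    using hi
  proof -
    assume a: "(P' has_integral (P 1 - P 0)) {0..1}"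
    have li: "((\<lambda>s. l * h s) has_integral l * integral {0..1} h) {0..1}"
      using hi by (rule has_integral_mult_right)
    moreover have "l * integral {0..1} h \<le> P 1 - P 0"
    proof (rule has_integral_le[OF li a])
      fix s :: real assume s: "s \<in> {0..1}"
      have "1 / cosh (s * T) \<le> 1/2 + exp (- (s*T)) - exp (- (s*T))^2 / 2"
        using s assms by (intro sech_le) auto
      hence "l * T * exp (- l * (s * T)) * (1 / cosh (s * T)) \<le> P' s"
        unfolding P'_def using assms by (intro mult_left_mono) auto
      thus "l * h s \<le> P' s" unfolding h_def by simp
    qed
    ultimately show ?thesis by blast
  qed
  hence le1: "l * integral {0..1} h \<le> P 1 - P 0" by blast
  have "P 1 - P 0 = 1/2 + l/(l+1) - l/(2*(l+2)) - exp (- l * T) / 2 - l / (l+1) * exp (- (l+1) * T)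
        + l / (2*(l+2)) * exp (- (l+2) * T)"
    unfolding P_def by simp
  also have "\<dots> \<le> 1/2 + l/(l+1) - l/(2*(l+2)) + l / (2*(l+2)) * exp (- (l+2) * T)"
  proof -
    have "0 \<le> l / (l+1) * exp (- (l+1) * T)" using assms by simp
    moreover have "0 \<le> exp (- l * T) / 2" by simp
    ultimately show ?thesis by linarith
  qed
  also have "l / (2*(l+2)) * exp (- (l+2) * T) \<le> exp (- T) / 2"
  proof -
    have "l / (2*(l+2)) \<le> 1/2" using assms by (simp add: field_simps)
    moreover have "exp (- (l+2) * T) \<le> exp (- T)"
    proof -
      have "1 * T \<le> (l+2) * T" using assms by (intro mult_right_mono) auto
      hence "- (l+2) * T \<le> - T" by (simp only: mult_minus_left)
      thus ?thesis by (rule exp_mono)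
    qed
    ultimately have "l / (2*(l+2)) * exp (- (l+2) * T) \<le> 1/2 * exp (- T)"
      using assms by (intro mult_mono) auto
    thus ?thesis by simp
  qed
  hence "1/2 + l/(l+1) - l/(2*(l+2)) + l / (2*(l+2)) * exp (- (l+2) * T) \<le> 1/2 + l/(l+1) - l/(2*(l+2)) + exp (- T) / 2"
    by simp
  also have "1/2 + l/(l+1) - l/(2*(l+2)) = 1 - 1 / ((l+1)*(l+2))"
  proof -
    have n1: "l + 1 \<noteq> 0" "l + 2 \<noteq> 0" using assms by auto
    have "1/2 + l/(l+1) - l/(2*(l+2)) = ((l+1)*(l+2) + 2*l*(l+2) - l*(l+1)) / (2*((l+1)*(l+2)))"
      using n1 by (simp add: divide_simps) (simp add: algebra_simps)
    also have "(l+1)*(l+2) + 2*l*(l+2) - l*(l+1) = 2*((l+1)*(l+2)) - 2" by (simp add: algebra_simps)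
    also have "(2*((l+1)*(l+2)) - 2) / (2*((l+1)*(l+2))) = 1 - 1 / ((l+1)*(l+2))"
      using n1 by (simp add: diff_divide_distrib)
    finally show ?thesis .
  qed
  finally show "l * integral {0..1} (\<lambda>s. T * exp (- l * (s * T)) / cosh (s * T))
           \<le> 1 - 1 / ((l+1)*(l+2)) + exp (- T) / 2" using le1 unfolding h_def by simp
qed


lemma key:
  fixes l x :: real
  assumes l: "0 < l" and x: "0 < x" "x < pi/2"
  defines "G \<equiv> (\<lambda>z. exp (\<i> * complex_of_real l * z) / cos z)"
  shows "cmod (complex_of_real l * contour_integral (linepath 0 (Complex x 0)) G - \<i>) < 1 / cos x"
proof -
  define B where "B = contour_integral (linepath 0 (Complex x 0)) G"
  have cx0: "0 < cos x" using x by (intro cos_gt_zero) auto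
  have "cos x < cos 0" using x by (intro cos_monotone_0_pi) auto
  hence cx: "0 < cos x" "cos x < 1" using cx0 by auto
  define s where "s = 1 / cos x"
  have s1: "1 < s" using cx by (simp add: s_def)
  define \<kappa> where "\<kappa> = 1 / ((l+1)*(l+2))"
  have k0: "0 < \<kappa>" using l by (simp add: \<kappa>_def)
  have k1: "\<kappa> \<le> 1/2"
  proof -
    have "2 \<le> (l+1)*(l+2)" using l by (simp add: algebra_simps)
    thus ?thesis unfolding \<kappa>_def by (simp add: divide_simps)
  qed
  define D where "D = (s - 1)/2 + 2 * l * x * s"
  have D0: "0 < D"
  proof -
    have p: "0 < 2 * l * x * s" using s1 l x by (intro mult_pos_pos) auto
    show ?thesis unfolding D_def using p s1 by (intro add_pos_pos) auto
  qed
  define E where "E = min (\<kappa>/2) (\<kappa> * (s - 1) / D)"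
  have E0: "0 < E" using k0 s1 D0 by (simp add: E_def)
  have E1: "E < 1" using k1 by (simp add: E_def min_def)
  define T where "T = 1 - ln E"
  have T0: "0 \<le> T" using E0 E1 ln_le_minus_one[of E] by (simp add: T_def)
  have eT: "exp (- T) < E"
  proof -
    have "exp (- T) = E * exp (-1)" using E0 by (simp add: T_def exp_diff exp_minus field_simps)
    also have "\<dots> < E * 1" using E0 by (intro mult_strict_left_mono) auto
    finally show ?thesis by simp
  qed
  define H where "H = integral {0..1} (\<lambda>s. T * exp (- l * (s * T)) / cosh (s * T))"
  define m where "m = l * H"
  have mle: "m \<le> 1 - \<kappa> + exp (- T) / 2" using H_bound(1)[OF l T0] by (simp add: m_def H_def \<kappa>_def)
  have m0: "0 \<le> m" using H_bound(2)[OF l T0] l by (simp add: m_def H_def)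
  have Ek: "E \<le> \<kappa>/2" unfolding E_def by (rule min.cobounded1)
  have m1: "m \<le> 1" using mle eT k0 Ek by linarith
  define I2 where "I2 = contour_integral (linepath (Complex x 0) (Complex x T)) G"
  define I3 where "I3 = contour_integral (linepath (Complex x T) (Complex 0 T)) G"
  have sum: "B + I2 + I3 + contour_integral (linepath (Complex 0 T) 0) G = 0"
    using cauchy_rect[OF x T0, of l] unfolding B_def I2_def I3_def G_def .
  have I4: "contour_integral (linepath (Complex 0 T) 0) G = - (\<i> * complex_of_real H)"
    using seg4[OF T0, of l] unfolding G_def H_def .
  have n2: "cmod I2 \<le> H / cos x" using seg2[OF x T0, of l] unfolding I2_def G_def H_def .
  have n3: "cmod I3 \<le> exp (- l * T) / (cos x * cosh T) * x" using seg3[OF x T0, of l] unfolding I3_def G_def .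
  have eq: "complex_of_real l * B - \<i> = - (complex_of_real l * I2) - complex_of_real l * I3 - \<i> * complex_of_real (1 - m)"
  proof -
    have Beq: "B = - I2 - I3 + \<i> * complex_of_real H" using sum I4 by (simp add: algebra_simps eq_neg_iff_add_eq_0)
    show ?thesis unfolding Beq m_def by (simp add: algebra_simps)
  qed
  have "cmod (complex_of_real l * B - \<i>) \<le> l * cmod I2 + l * cmod I3 + (1 - m)"
  proof -
    have "cmod (complex_of_real l * B - \<i>) \<le> cmod (complex_of_real l * I2) + cmod (complex_of_real l * I3) + cmod (\<i> * complex_of_real (1 - m))"
    proof -
      have tri: "cmod (- a - b - c) \<le> cmod a + cmod b + cmod c" for a b c :: complex
        using norm_triangle_ineq4[of "-a-b" c] norm_triangle_ineq4[of "-a" b] by simp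
      show ?thesis unfolding eq by (rule tri)
    qed
    moreover have "cmod (complex_of_real (1 - m)) = 1 - m" using m1 by (simp only: norm_of_real)
    ultimately show ?thesis using l by (simp only: norm_mult norm_ii norm_of_real) simp
  qed
  also have "l * cmod I2 \<le> m * s" using n2 l by (simp add: m_def s_def mult_left_mono divide_inverse mult.assoc[symmetric])
  also have "l * cmod I3 \<le> l * x * s * (2 * exp (- T))"
  proof -
    have ch: "1 / cosh T \<le> 2 * exp (- T)"
    proof -
      have "exp T / 2 \<le> cosh T" by (simp add: cosh_def)
      hence "1 / cosh T \<le> 1 / (exp T / 2)" by (intro divide_left_mono) auto
      thus ?thesis by (simp add: exp_minus field_simps)
    qed
    have "exp (- l * T) \<le> 1" using l T0 by simp
    hence "exp (- l * T) / (cos x * cosh T) * x \<le> 1 / (cos x * cosh T) * x"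
      using cx x by (intro mult_right_mono divide_right_mono) auto
    also have "\<dots> = s * (1 / cosh T) * x" by (simp add: s_def)
    also have "\<dots> \<le> s * (2 * exp (- T)) * x"
      using s1 x ch by (intro mult_right_mono mult_left_mono) auto
    finally have "cmod I3 \<le> s * (2 * exp (- T)) * x" using n3 by linarith
    thus ?thesis using l by (simp add: mult_left_mono algebra_simps)
  qed
  also have "m * s + l * x * s * (2 * exp (- T)) + (1 - m) = 1 + m * (s - 1) + l * x * s * (2 * exp (- T))"
    by (simp add: algebra_simps)
  also have "\<dots> \<le> 1 + (1 - \<kappa> + exp (- T) / 2) * (s - 1) + l * x * s * (2 * exp (- T))"
    using mle s1 by (simp add: mult_right_mono)
  also have "\<dots> = s - \<kappa> * (s - 1) + exp (- T) * D" by (simp add: D_def algebra_simps)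
  also have "\<dots> < s - \<kappa> * (s - 1) + E * D" using eT D0 by simp
  also have "E * D \<le> \<kappa> * (s - 1)"
  proof -
    have "E \<le> \<kappa> * (s - 1) / D" unfolding E_def by (rule min.cobounded2)
    thus ?thesis using D0 by (simp add: pos_le_divide_eq)
  qed
  finally show ?thesis unfolding B_def s_def by simp
qed


lemma pos_case:
  fixes l theta x :: real
  assumes l: "0 < l" and x: "0 < x" "x < pi/2"
  shows "\<bar>l * integral {0..x} (\<lambda>y. cos (l * y - theta) / cos y) - sin theta\<bar> < 1 / cos x"
proof -
  define G where "G = (\<lambda>z. exp (\<i> * complex_of_real l * z) / cos z)"
  define B where "B = contour_integral (linepath 0 (Complex x 0)) G"
  define e where "e = exp (- (\<i> * complex_of_real theta))"
  have hB: "((\<lambda>y. G (complex_of_real y)) has_integral B) {0..x}"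
    using seg1[OF x, of l] unfolding G_def B_def .
  hence "((\<lambda>y. e * G (complex_of_real y)) has_integral e * B) {0..x}"
    by (rule has_integral_mult_right)
  hence hR: "((\<lambda>y. Re (e * G (complex_of_real y))) has_integral Re (e * B)) {0..x}"
    by (rule has_integral_Re)
  have pt: "Re (e * G (complex_of_real y)) = cos (l * y - theta) / cos y" for y
  proof -
    have "e * G (complex_of_real y) = exp (\<i> * complex_of_real (l * y - theta)) / complex_of_real (cos y)"
      unfolding e_def G_def cos_of_real[symmetric] by (simp add: exp_add[symmetric] algebra_simps)
    also have "Re \<dots> = cos (l * y - theta) / cos y"
      by (simp add: Re_divide_of_real Re_exp)
    finally show ?thesis .
  qed
  have int: "integral {0..x} (\<lambda>y. cos (l * y - theta) / cos y) = Re (e * B)"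
    using hR unfolding pt by (rule integral_unique)
  have "l * integral {0..x} (\<lambda>y. cos (l * y - theta) / cos y) - sin theta = Re (e * (complex_of_real l * B - \<i>))"
  proof -
    have "Re (e * \<i>) = sin theta" by (simp add: e_def Re_exp Im_exp)
    thus ?thesis unfolding int by (simp add: algebra_simps)
  qed
  also have "\<bar>\<dots>\<bar> \<le> cmod (e * (complex_of_real l * B - \<i>))" by (rule abs_Re_le_cmod)
  also have "\<dots> = cmod (complex_of_real l * B - \<i>)" by (simp add: e_def norm_mult norm_exp_eq_Re)
  also have "\<dots> < 1 / cos x" using key[OF l x] unfolding B_def G_def .
  finally show ?thesis .
qed

theorem corollary2:
  fixes lambda theta x :: real
  assumes "0 < x" and "x < pi / 2"
  shows "\<bar>lambda * integral {0..x} (\<lambda>y. cos (lambda * y - theta) / cos y) - sin theta\<bar> < 1 / cos x"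
proof -
  have cx0: "0 < cos x" using assms by (intro cos_gt_zero) auto
  have "cos x < cos 0" using assms by (intro cos_monotone_0_pi) auto
  hence s1: "1 < 1 / cos x" using cx0 by simp
  consider "lambda > 0" | "lambda = 0" | "lambda < 0" by linarith
  thus ?thesis
  proof cases
    case 1 thus ?thesis using pos_case assms by blast
  next
    case 2
    have "\<bar>sin theta\<bar> \<le> 1" by (rule abs_sin_le_one)
    moreover have "\<bar>lambda * integral {0..x} (\<lambda>y. cos (lambda * y - theta) / cos y) - sin theta\<bar> = \<bar>sin theta\<bar>"
      using 2 by simp
    ultimately show ?thesis using s1 by linarith
  next
    case 3
    hence "\<bar>(- lambda) * integral {0..x} (\<lambda>y. cos ((- lambda) * y - (- theta)) / cos y) - sin (- theta)\<bar> < 1 / cos x"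
      using pos_case assms by (metis neg_0_less_iff_less)
    moreover have "(\<lambda>y. cos ((- lambda) * y - (- theta)) / cos y) = (\<lambda>y. cos (lambda * y - theta) / cos y)"
    proof
      fix y
      have "(- lambda) * y - (- theta) = - (lambda * y - theta)" by simp
      thus "cos ((- lambda) * y - (- theta)) / cos y = cos (lambda * y - theta) / cos y" by (simp only: cos_minus)
    qed
    ultimately show ?thesis by (simp add: abs_minus_commute)
  qed
qed

end
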